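(* Assume Dickson's conjecture. Then there exist infinitely many primes $q$ such that $2q+1$, $6q+1$ and $8q+1$ are all prime, while $iq+1$ is not prime for each $i\in\{10,12,14,16,18\}$.
   Context: Dickson's conjecture: Let $a_1,\dots,a_k$ be integers and $b_1,\dots,b_k$ positive integers. If there is no prime $q$ such that $q$ divides $\prod_{i=1}^k(a_i+b_in)$ for every $n\in\{0,1,\dots,q-1\}$, then there are infinitely many positive integers $n$ for which $a_1+b_1n,\dots,a_k+b_kn$ are all prime. *)

theory Defs
  imports "HOL-Computational_Algebra.Primes"
begin

definition dickson_conjecture :: bool where
  "dickson_conjecture \<longleftrightarrow>
    (\<forall>(k::nat) (a::nat \<Rightarrow> int) (b::nat \<Rightarrow> int).
       (\<forall>i<k. b i > 0) \<longrightarrow>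
       \<not> (\<exists>q::int. prime q \<and> (\<forall>n\<in>{0..q-1}. q dvd (\<Prod>i<k. a i + b i * n))) \<longrightarrow>
       infinite {n::int. n > 0 \<and> (\<forall>i<k. prime (a i + b i * n))})"

end

theory Submission
  imports Defs
begin

lemma root_le1:
  fixes p a b :: int
  assumes p: "prime p" and nb: "\<not> p dvd b"
  shows "card {n\<in>{0..p-1}. p dvd a + b*n} \<le> 1"
proof -
  have fin: "finite {n\<in>{0..p-1}. p dvd a + b*n}" by (rule finite_subset[of _ "{0..p-1}"]) auto
  have "\<forall>x\<in>{n\<in>{0..p-1}. p dvd a + b*n}. \<forall>y\<in>{n\<in>{0..p-1}. p dvd a + b*n}. x = y"
  proof (intro ballI)
    fix x y assume x: "x \<in> {n\<in>{0..p-1}. p dvd a + b*n}" and y: "y \<in> {n\<in>{0..p-1}. p dvd a + b*n}"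
    have "p dvd (a + b*x) - (a + b*y)" using x y dvd_diff[of p "a+b*x" "a+b*y"] by simp
    hence "p dvd b * (x - y)" by (simp add: algebra_simps)
    hence d: "p dvd x - y" using p nb by (simp add: prime_dvd_mult_iff)
    have "\<bar>x - y\<bar> < p" using x y by auto
    show "x = y"
    proof (rule ccontr)
      assume "x \<noteq> y"
      hence "0 < \<bar>x - y\<bar>" by simp
      moreover have "p dvd \<bar>x - y\<bar>" using d by simp
      ultimately have "p \<le> \<bar>x - y\<bar>" by (rule zdvd_imp_le[rotated])
      thus False using \<open>\<bar>x - y\<bar> < p\<close> by simp
    qed
  qed
  thus ?thesis using card_le_Suc0_iff_eq[OF fin] by simp
qed

lemma root_empty:
  fixes p a b :: int
  assumes p: "prime p" and cb: "coprime a b" and pb: "p dvd b"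
  shows "{n\<in>{0..p-1}. p dvd a + b*n} = {}"
proof (rule ccontr)
  assume "{n\<in>{0..p-1}. p dvd a + b*n} \<noteq> {}"
  then obtain n where "p dvd a + b*n" by auto
  moreover have "p dvd b*n" using pb by simp
  ultimately have "p dvd a" by (simp add: dvd_add_left_iff)
  hence "p dvd 1" using pb cb by (meson coprime_common_divisor)
  thus False using p by (simp add: prime_int_iff)
qed

definition aa :: "nat \<Rightarrow> int" where
  "aa i = (if i = 0 then 131 else if i = 1 then 263 else if i = 2 then 787 else 1049)"
definition bb :: "nat \<Rightarrow> int" where
  "bb i = (if i = 0 then 1365 else if i = 1 then 2730 else if i = 2 then 8190 else 10920)"

lemma coprime_bez:
  fixes a b u v :: int
  assumes "u*a + v*b = 1"
  shows "coprime a b"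
proof (rule coprimeI)
  fix c assume "c dvd a" "c dvd b"
  hence "c dvd u*a + v*b" by simp
  thus "is_unit c" using assms by simp
qed

lemma coprime_ab: "coprime (aa i) (bb i)"
proof -
  have "coprime (131::int) 1365" by (rule coprime_bez[of 521 _ "-50"]) simp
  moreover have "coprime (263::int) 2730" by (rule coprime_bez[of 737 _ "-71"]) simp
  moreover have "coprime (787::int) 8190" by (rule coprime_bez[of "-947" _ 91]) simp
  moreover have "coprime (1049::int) 10920" by (rule coprime_bez[of "-2311" _ 222]) simp
  ultimately show ?thesis unfolding aa_def bb_def by simp
qed

lemma admissible:
  fixes p :: int
  assumes p: "prime p"
  shows "\<exists>n\<in>{0..p-1}. \<not> p dvd (\<Prod>i<4. aa i + bb i * n)"
proof -
  define S where "S i = {n\<in>{0..p-1}. p dvd aa i + bb i*n}" for i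
  have Seq: "{n\<in>{0..p-1}. p dvd (\<Prod>i<4. aa i + bb i * n)} = (\<Union>i\<in>{..<4}. S i)"
    using p by (auto simp: S_def prime_dvd_prod_iff)
  have cS: "card (S i) \<le> (if p dvd bb i then 0 else 1)" for i
  proof (cases "p dvd bb i")
    case True
    have "S i = {}" unfolding S_def by (rule root_empty[OF p coprime_ab True])
    thus ?thesis by simp
  next
    case False thus ?thesis using root_le1[OF p False] by (simp add: S_def)
  qed
  have "card (\<Union>i\<in>{..<4}. S i) \<le> (\<Sum>i<4. card (S i))" by (rule card_UN_le) simp
  also have "\<dots> \<le> (\<Sum>i<4::nat. if p dvd bb i then 0 else 1)" by (rule sum_mono) (use cS in auto)
  finally have c: "card (\<Union>i\<in>{..<4}. S i) \<le> (\<Sum>i<4::nat. if p dvd bb i then 0 else 1)" .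
  have p2: "p \<ge> 2" using p by (simp add: prime_ge_2_int)
  have "card (\<Union>i\<in>{..<4}. S i) < card {0..p-1}"
  proof (cases "p \<ge> 5")
    case True
    have "(\<Sum>i<4::nat. (if p dvd bb i then 0 else 1)::nat) \<le> (\<Sum>i<4::nat. 1)" by (rule sum_mono) auto
    thus ?thesis using c True by simp
  next
    case False
    hence "p = 2 \<or> p = 3 \<or> p = 4" using p2 by auto
    hence "p = 2 \<or> p = 3" using p by (auto dest: prime_odd_int)
    thus ?thesis using c by (auto simp: bb_def numeral_eq_Suc lessThan_Suc)
  qed
  hence "(\<Union>i\<in>{..<4}. S i) \<noteq> {0..p-1}" by auto
  moreover have "(\<Union>i\<in>{..<4}. S i) \<subseteq> {0..p-1}" by (auto simp: S_def)
  ultimately show ?thesis using Seq by blast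
qed

lemma not_prime_mult:
  fixes a b :: nat
  assumes "a > 1" "b > 1"
  shows "\<not> prime (a*b)"
  using prime_product[of a b] assms by auto

lemma member:
  fixes m :: nat
  assumes "prime (int (131+1365*m))" "prime (int (263+2730*m))"
    "prime (int (787+8190*m))" "prime (int (1049+10920*m))"
  shows "131+1365*m \<in> {q::nat. prime q \<and> prime (2*q+1) \<and> prime (6*q+1) \<and> prime (8*q+1)
                    \<and> (\<forall>i\<in>{10,12,14,16,18::nat}. \<not> prime (i*q+1))}"
proof -
  define q where "q = 131+1365*m"
  have p: "prime q" "prime (2*q+1)" "prime (6*q+1)" "prime (8*q+1)"
    using assms unfolding q_def prime_nat_int_transfer by (simp_all add: algebra_simps)
  have "10*q+1 = 3*(437+4550*m)" unfolding q_def by simp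
  hence n10: "\<not> prime (10*q+1)" using not_prime_mult[of 3 "437+4550*m"] by simp
  have "12*q+1 = 13*(121+1260*m)" unfolding q_def by simp
  hence n12: "\<not> prime (12*q+1)" using not_prime_mult[of 13 "121+1260*m"] by simp
  have "14*q+1 = 5*(367+3822*m)" unfolding q_def by simp
  hence n14: "\<not> prime (14*q+1)" using not_prime_mult[of 5 "367+3822*m"] by simp
  have "16*q+1 = 3*(699+7280*m)" unfolding q_def by simp
  hence n16: "\<not> prime (16*q+1)" using not_prime_mult[of 3 "699+7280*m"] by simp
  have "18*q+1 = 7*(337+3510*m)" unfolding q_def by simp
  hence n18: "\<not> prime (18*q+1)" using not_prime_mult[of 7 "337+3510*m"] by simp
  show ?thesis using p n10 n12 n14 n16 n18 unfolding q_def[symmetric] by simp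
qed

theorem lemma6p1:
  assumes "dickson_conjecture"
  shows "infinite {q::nat. prime q \<and> prime (2*q+1) \<and> prime (6*q+1) \<and> prime (8*q+1)
                    \<and> (\<forall>i\<in>{10,12,14,16,18::nat}. \<not> prime (i*q+1))}"
    (is "infinite ?T")
proof -
  define N where "N = {n::int. n > 0 \<and> (\<forall>i<4. prime (aa i + bb i * n))}"
  have adm: "\<not> (\<exists>q::int. prime q \<and> (\<forall>n\<in>{0..q-1}. q dvd (\<Prod>i<4. aa i + bb i * n)))"
    using admissible by blast
  have bpos: "\<forall>i<4. bb i > 0" by (simp add: bb_def)
  have infN: "infinite N"
  proof -
    have D: "\<forall>(k::nat) (a::nat \<Rightarrow> int) (b::nat \<Rightarrow> int).
       (\<forall>i<k. b i > 0) \<longrightarrow>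
       \<not> (\<exists>q::int. prime q \<and> (\<forall>n\<in>{0..q-1}. q dvd (\<Prod>i<k. a i + b i * n))) \<longrightarrow>
       infinite {n::int. n > 0 \<and> (\<forall>i<k. prime (a i + b i * n))}"
      using assms unfolding dickson_conjecture_def .
    show ?thesis unfolding N_def
      by (rule mp[OF mp[OF spec[OF spec[OF spec[OF D, of 4], of aa], of bb] bpos] adm])
  qed
  define f where "f n = nat (131 + 1365*n)" for n :: int
  have inj: "inj_on f N" unfolding inj_on_def f_def N_def by auto
  have sub: "f ` N \<subseteq> ?T"
  proof
    fix q assume "q \<in> f ` N"
    then obtain n where n: "n \<in> N" and q: "q = f n" by auto
    have "n > 0" using n unfolding N_def by simp
    define m where "m = nat n"
    have m: "n = int m" using \<open>n > 0\<close> unfolding m_def by simp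
    have pr: "\<forall>i<4. prime (aa i + bb i * int m)" using n m unfolding N_def by simp
    have "prime (aa i + bb i * int m)" if "i < 4" for i using pr that by blast
    from this[of 0] this[of 1] this[of 2] this[of 3]
    have "prime (int (131+1365*m))" "prime (int (263+2730*m))"
      "prime (int (787+8190*m))" "prime (int (1049+10920*m))"
      by (simp_all add: aa_def bb_def)
    hence "131+1365*m \<in> ?T" by (rule member)
    moreover have "q = 131+1365*m" unfolding q f_def m by simp
    ultimately show "q \<in> ?T" by simp
  qed
  have "infinite (f ` N)" using infN inj finite_imageD by blast
  thus ?thesis using sub infinite_super by blast
qed

end
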